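(* Let $A,B\in\mathbb{T}^{m\times n}$ have integer finite entries, with every column of $A$ and every row of $B$ containing a finite entry, and let $F=A^\sharp\circ B$. Suppose there exists $v\in\mathbb{R}^n$ with $F(v)=\rho(F)+v$ and $\rho(F)\ne0$. Consider value iteration: $u^0=0$, $u^{\ell+1}=F(u^\ell)$, continued while $\max_iu^\ell_i\ge0$ and $\min_iu^\ell_i\le0$, with $N$ the first index where this fails. Then $N\le 2n^2W$.
   Context: $\mathbb{T}=\mathbb{R}\cup\{-\infty\}$. $(B\odot x)_i=\max_j(B_{ij}+x_j)$; $A^\sharp(y)_j=\min_i(-A_{ij}+y_i)$ with $(+\infty)+(-\infty)=+\infty$. The scalar $\rho(F)$ with $F(v)=\rho(F)+v$ for some $v\in\mathbb{R}^n$ is unique (ergodic constant). $W=\max\{|A_{ij}-B_{ih}|: A_{ij}\ne-\infty,\ B_{ih}\ne-\infty\}$. *)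

theory Defs
  imports Complex_Main "HOL-Library.Extended_Real"
begin

text \<open>Tropical numbers T = R \<union> {-\<infinity>} are modelled inside ereal (only -\<infinity> and finite
values occur as matrix entries). Matrices are functions nat \<Rightarrow> nat \<Rightarrow> ereal with
row indices i < m and column indices j < n; vectors are functions nat \<Rightarrow> ereal
with indices < n (resp. < m). The ereal addition satisfies \<infinity> + (-\<infinity>) = \<infinity>,
which is exactly the convention of the paper.\<close>

definition tmult :: "nat \<Rightarrow> (nat \<Rightarrow> nat \<Rightarrow> ereal) \<Rightarrow> (nat \<Rightarrow> ereal) \<Rightarrow> nat \<Rightarrow> ereal" where
  "tmult n B x i = Max {B i j + x j | j. j < n}"

definition tres :: "nat \<Rightarrow> (nat \<Rightarrow> nat \<Rightarrow> ereal) \<Rightarrow> (nat \<Rightarrow> ereal) \<Rightarrow> nat \<Rightarrow> ereal" where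
  "tres m A y j = Min {- A i j + y i | i. i < m}"

definition shapley :: "nat \<Rightarrow> nat \<Rightarrow> (nat \<Rightarrow> nat \<Rightarrow> ereal) \<Rightarrow> (nat \<Rightarrow> nat \<Rightarrow> ereal)
    \<Rightarrow> (nat \<Rightarrow> ereal) \<Rightarrow> nat \<Rightarrow> ereal" where
  "shapley m n A B x = tres m A (tmult n B x)"

definition Wconst :: "nat \<Rightarrow> nat \<Rightarrow> (nat \<Rightarrow> nat \<Rightarrow> ereal) \<Rightarrow> (nat \<Rightarrow> nat \<Rightarrow> ereal) \<Rightarrow> real" where
  "Wconst m n A B = Max {\<bar>real_of_ereal (A i j) - real_of_ereal (B i h)\<bar> | i j h.
      i < m \<and> j < n \<and> h < n \<and> A i j \<noteq> -\<infinity> \<and> B i h \<noteq> -\<infinity>}"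

definition viter :: "nat \<Rightarrow> nat \<Rightarrow> (nat \<Rightarrow> nat \<Rightarrow> ereal) \<Rightarrow> (nat \<Rightarrow> nat \<Rightarrow> ereal)
    \<Rightarrow> nat \<Rightarrow> nat \<Rightarrow> ereal" where
  "viter m n A B l = (shapley m n A B ^^ l) (\<lambda>_. 0)"

definition continues :: "nat \<Rightarrow> (nat \<Rightarrow> ereal) \<Rightarrow> bool" where
  "continues n u \<longleftrightarrow> Max {u i | i. i < n} \<ge> 0 \<and> Min {u i | i. i < n} \<le> 0"

end

theory Submission imports Defs begin

lemma pigeon:
  fixes s :: "nat \<Rightarrow> nat"
  assumes "\<forall>t\<le>n. s t < n"
  shows "\<exists>p q. p < q \<and> q \<le> n \<and> s p = s q"
proof -
  have "s ` {..n} \<subseteq> {..<n}" using assms by auto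
  hence "card (s ` {..n}) \<le> n" by (metis card_lessThan card_mono finite_lessThan)
  hence "\<not> inj_on s {..n}" by (intro pigeonhole) simp
  then obtain x y where "x \<le> n" "y \<le> n" "x \<noteq> y" "s x = s y" unfolding inj_on_def by auto
  thus ?thesis by (metis linorder_neqE_nat)
qed

lemma cyc_ge1:
  fixes w \<phi> :: "nat \<Rightarrow> real" and s :: "nat \<Rightarrow> nat"
  assumes "p < q" "s p = s q" "r > 0"
    and "\<forall>t\<in>{p..<q}. w t \<in> \<int> \<and> w t \<ge> r + \<phi> (s t) - \<phi> (s (Suc t))"
  shows "(\<Sum>t\<in>{p..<q}. w t) \<ge> 1"
proof -
  have "real (q - p) * r = real (q - p) * r - (\<phi> (s q) - \<phi> (s p))" using assms(2) by simp
  also have "\<dots> = (\<Sum>t\<in>{p..<q}. r - (\<phi> (s (Suc t)) - \<phi> (s t)))"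
    using sum_Suc_diff'[of p q "\<lambda>t. \<phi> (s t)"] assms(1) by (simp add: sum_subtractf)
  also have "\<dots> \<le> (\<Sum>t\<in>{p..<q}. w t)"
    using assms(4) by (intro sum_mono) fastforce
  finally have pos: "(\<Sum>t\<in>{p..<q}. w t) > 0" using assms(1,3) by (smt (verit) of_nat_0_less_iff zero_less_diff mult_pos_pos)
    have "(\<Sum>t\<in>{p..<q}. w t) \<in> \<int>" using assms(4) by (intro Ints_sum) auto
  with pos show ?thesis using Ints_nonzero_abs_ge1 by fastforce
qed

lemma walk_bound:
  fixes w \<phi> :: "nat \<Rightarrow> real" and s :: "nat \<Rightarrow> nat"
  assumes "0 < n" "r > 0" "W \<ge> 0" "\<forall>t\<le>l. s t < n"
    and "\<forall>t<l. w t \<in> \<int> \<and> \<bar>w t\<bar> \<le> W \<and> w t \<ge> r + \<phi> (s t) - \<phi> (s (Suc t))"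
  shows "(\<Sum>t<l. w t) \<ge> (real l - real n + 1) / real n - (real n - 1) * W"
  using assms(4,5)
proof (induction l arbitrary: s w rule: less_induct)
  case (less l)
  show ?case
  proof (cases "l < n")
    case True
    have "(\<Sum>t<l. w t) \<ge> (\<Sum>t<l. - W)" using less.prems by (intro sum_mono) fastforce
    hence s1: "(\<Sum>t<l. w t) \<ge> - real l * W" by simp
    have "real l \<le> real n - 1" using True by linarith
    hence "real l * W \<le> (real n - 1) * W" using assms(3) by (simp add: mult_right_mono)
    moreover have "(real l - real n + 1) / real n \<le> 0" using True assms(1)
      by (intro divide_nonpos_pos) auto
    ultimately show ?thesis using s1 by linarith
  next
    case False
    then obtain p q where pq: "p < q" "q \<le> n" "s p = s q" using pigeon[of n s] less.prems(1) by auto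
    define d where "d = q - p"
    have dpos: "0 < d" "d \<le> n" "d \<le> l" using pq False unfolding d_def by auto
    define s' where "s' = (\<lambda>t. if t < p then s t else s (t + d))"
    define w' where "w' = (\<lambda>t. if t < p then w t else w (t + d))"
    have IH: "(\<Sum>t<l-d. w' t) \<ge> (real (l-d) - real n + 1) / real n - (real n - 1) * W"
    proof (rule less.IH)
      show "l - d < l" using dpos by simp
      show "\<forall>t\<le>l - d. s' t < n" using less.prems(1) dpos unfolding s'_def
        by (auto simp: not_less)
      show "\<forall>t<l - d. w' t \<in> \<int> \<and> \<bar>w' t\<bar> \<le> W \<and> r + \<phi> (s' t) - \<phi> (s' (Suc t)) \<le> w' t"
      proof (intro allI impI)
        fix t assume t: "t < l - d"
        show "w' t \<in> \<int> \<and> \<bar>w' t\<bar> \<le> W \<and> r + \<phi> (s' t) - \<phi> (s' (Suc t)) \<le> w' t"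
        proof (cases "t < p")
          case True
          then have "t < l" using t by simp
          moreover have "s' (Suc t) = s (Suc t)"
          proof (cases "Suc t < p")
            case False
            then have "Suc t = p" using True by simp
            then have "Suc t + d = q" using pq unfolding d_def by simp
            then show ?thesis using False pq \<open>Suc t = p\<close> unfolding s'_def by simp
          qed (simp add: s'_def)
          ultimately show ?thesis using less.prems(2) True unfolding s'_def w'_def by auto
        next
          case False
          then have "t + d < l" using t by simp
          thus ?thesis using less.prems(2) False unfolding s'_def w'_def by auto
        qed
      qed
    qed
    have split1: "(\<Sum>t<l. w t) = (\<Sum>t\<in>{0..<p}. w t) + (\<Sum>t\<in>{p..<q}. w t) + (\<Sum>t\<in>{q..<l}. w t)"
      using pq False by (simp add: atLeast0LessThan[symmetric] sum.atLeastLessThan_concat)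
    have "(\<Sum>t<l-d. w' t) = (\<Sum>t\<in>{0..<p}. w' t) + (\<Sum>t\<in>{p..<l-d}. w' t)"
      using pq False dpos d_def by (simp add: atLeast0LessThan[symmetric] sum.atLeastLessThan_concat)
    also have "(\<Sum>t\<in>{0..<p}. w' t) = (\<Sum>t\<in>{0..<p}. w t)" unfolding w'_def by simp
    also have "(\<Sum>t\<in>{p..<l-d}. w' t) = (\<Sum>t\<in>{p..<l-d}. w (t + d))" unfolding w'_def by simp
    also have "\<dots> = (\<Sum>t\<in>{p+d..<l-d+d}. w t)" by (rule sum.shift_bounds_nat_ivl[symmetric])
    also have "{p+d..<l-d+d} = {q..<l}" using dpos pq d_def by auto
    finally have split2: "(\<Sum>t<l-d. w' t) = (\<Sum>t\<in>{0..<p}. w t) + (\<Sum>t\<in>{q..<l}. w t)" .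
    have cyc: "(\<Sum>t\<in>{p..<q}. w t) \<ge> 1"
      using cyc_ge1[of p q s r w \<phi>] pq assms(2) less.prems(2) False by auto
    have "real (l - d) = real l - real d" using dpos by simp
    moreover have "real d / real n \<le> 1" using dpos assms(1) by simp
    moreover have "(real (l - d) - real n + 1) / real n = (real l - real n + 1) / real n - real d / real n"
      using dpos by (simp add: diff_divide_distrib add_divide_distrib)
    ultimately show ?thesis using IH split1 split2 cyc by linarith
  qed
qed

lemma walk_W:
  fixes w \<phi> :: "nat \<Rightarrow> real" and s :: "nat \<Rightarrow> nat"
  assumes "0 < n" "r > 0" "n \<le> l" "\<forall>t\<le>l. s t < n"
    and "\<forall>t<l. w t \<in> \<int> \<and> \<bar>w t\<bar> \<le> W \<and> w t \<ge> r + \<phi> (s t) - \<phi> (s (Suc t))"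
  shows "real n * W \<ge> 1"
proof -
  obtain p q where pq: "p < q" "q \<le> n" "s p = s q" using pigeon[of n s] assms by auto
  have "1 \<le> (\<Sum>t\<in>{p..<q}. w t)" using cyc_ge1[of p q s r w \<phi>] pq assms by auto
  also have "\<dots> \<le> (\<Sum>t\<in>{p..<q}. W)" using assms pq by (intro sum_mono) (smt (verit) atLeastLessThan_iff le_trans less_imp_le_nat order_less_le_trans)
  also have "\<dots> = real (q - p) * W" by simp
  finally have 1: "1 \<le> real (q-p) * W" .
  have "W \<ge> 0" using assms(5) assms(1,3) by (metis abs_ge_zero less_le_trans order.trans)
  moreover have "real (q - p) \<le> real n" using pq by simp
  ultimately show ?thesis using 1 by (meson mult_right_mono order.trans)
qed


lemma tmult_props:
  assumes "0 < n" "\<forall>h<n. \<exists>c. x h = ereal c" "\<exists>h<n. B i h \<noteq> -\<infinity>"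
  shows "\<exists>h0<n. B i h0 \<noteq> -\<infinity> \<and> tmult n B x i = B i h0 + x h0 \<and> (\<forall>h<n. B i h + x h \<le> tmult n B x i)"
proof -
  have S: "{B i j + x j | j. j < n} = (\<lambda>j. B i j + x j) ` {..<n}" by auto
  have fin: "finite ((\<lambda>j. B i j + x j) ` {..<n})" by simp
  have ne: "(\<lambda>j. B i j + x j) ` {..<n} \<noteq> {}" using assms(1) by auto
  obtain h0 where h0: "h0<n" "tmult n B x i = B i h0 + x h0"
    using Max_in[OF fin ne] unfolding tmult_def S by auto
  have ge: "\<forall>h<n. B i h + x h \<le> tmult n B x i" unfolding tmult_def S using fin by auto
  obtain h1 where h1: "h1 < n" "B i h1 \<noteq> -\<infinity>" using assms(3) by auto
  obtain c1 where c1: "x h1 = ereal c1" using assms(2) h1 by auto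
  obtain c0 where c0: "x h0 = ereal c0" using assms(2) h0 by auto
  have "B i h1 + x h1 \<le> B i h0 + x h0" using ge h1 h0 by auto
  moreover have "B i h1 + x h1 \<noteq> -\<infinity>" using h1 c1 by (cases "B i h1") auto
  ultimately have "B i h0 \<noteq> -\<infinity>" using c0 by auto
  thus ?thesis using h0 ge by auto
qed

lemma tres_props:
  assumes "0 < m" "\<forall>i<m. \<exists>c. y i = ereal c" "\<exists>i<m. A i j \<noteq> -\<infinity>" "\<forall>i<m. A i j \<noteq> \<infinity>"
  shows "\<exists>i0<m. A i0 j \<noteq> -\<infinity> \<and> tres m A y j = -A i0 j + y i0 \<and> (\<forall>i<m. tres m A y j \<le> -A i j + y i)"
proof -
  have S: "{- A i j + y i | i. i < m} = (\<lambda>i. - A i j + y i) ` {..<m}" by auto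
  have fin: "finite ((\<lambda>i. - A i j + y i) ` {..<m})" by simp
  have ne: "(\<lambda>i. - A i j + y i) ` {..<m} \<noteq> {}" using assms(1) by auto
  obtain i0 where i0: "i0<m" "tres m A y j = - A i0 j + y i0"
    using Min_in[OF fin ne] unfolding tres_def S by auto
  have le: "\<forall>i<m. tres m A y j \<le> - A i j + y i" unfolding tres_def S using fin by auto
  obtain i1 where i1: "i1 < m" "A i1 j \<noteq> -\<infinity>" using assms(3) by auto
  obtain c1 where c1: "y i1 = ereal c1" using assms(2) i1 by auto
  obtain c0 where c0: "y i0 = ereal c0" using assms(2) i0 by auto
  have "- A i0 j + y i0 \<le> - A i1 j + y i1" using le i1 i0 by auto
  moreover have "- A i1 j + y i1 \<noteq> \<infinity>" using i1 c1 assms(4) by (cases "A i1 j") auto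
  ultimately have "A i0 j \<noteq> -\<infinity>" using c0 by auto
  thus ?thesis using i0 le by auto
qed

lemma Wconst_ge:
  assumes "i < m" "j < n" "h < n" "A i j \<noteq> -\<infinity>" "B i h \<noteq> -\<infinity>"
  shows "\<bar>real_of_ereal (A i j) - real_of_ereal (B i h)\<bar> \<le> Wconst m n A B"
proof -
  have "{\<bar>real_of_ereal (A i j) - real_of_ereal (B i h)\<bar> | i j h.
      i < m \<and> j < n \<and> h < n \<and> A i j \<noteq> -\<infinity> \<and> B i h \<noteq> -\<infinity>}
    \<subseteq> (\<lambda>(i,j,h). \<bar>real_of_ereal (A i j) - real_of_ereal (B i h)\<bar>) ` ({..<m} \<times> {..<n} \<times> {..<n})"
    by (auto intro!: image_eqI[where x="(_,_,_)"])
  hence fin: "finite {\<bar>real_of_ereal (A i j) - real_of_ereal (B i h)\<bar> | i j h.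
      i < m \<and> j < n \<and> h < n \<and> A i j \<noteq> -\<infinity> \<and> B i h \<noteq> -\<infinity>}"
    by (rule finite_subset) simp
  show ?thesis unfolding Wconst_def
    by (rule Max_ge[OF fin]) (use assms in blast)
qed


theorem mainTheorem13:
  fixes m n :: nat and A B :: "nat \<Rightarrow> nat \<Rightarrow> ereal"
  assumes "0 < m" and "0 < n"
    and A_int: "\<forall>i<m. \<forall>j<n. A i j = -\<infinity> \<or> (\<exists>k::int. A i j = ereal (of_int k))"
    and B_int: "\<forall>i<m. \<forall>j<n. B i j = -\<infinity> \<or> (\<exists>k::int. B i j = ereal (of_int k))"
    and A_col: "\<forall>j<n. \<exists>i<m. A i j \<noteq> -\<infinity>"
    and B_row: "\<forall>i<m. \<exists>j<n. B i j \<noteq> -\<infinity>"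
    and eig: "\<exists>(v :: nat \<Rightarrow> real) (r :: real).
               (\<forall>j<n. shapley m n A B (\<lambda>h. ereal (v h)) j = ereal (r + v j)) \<and> r \<noteq> 0"
  shows "\<exists>N. \<not> continues n (viter m n A B N) \<and> (\<forall>l<N. continues n (viter m n A B l))
             \<and> real N \<le> 2 * real n ^ 2 * Wconst m n A B"
proof -
  note m0 = \<open>0 < m\<close> and n0 = \<open>0 < n\<close>
  obtain v r where eigv: "\<forall>j<n. shapley m n A B (\<lambda>h. ereal (v h)) j = ereal (r + v j)"
    and r0: "r \<noteq> 0" using eig by blast
  define u where "u = viter m n A B"
  have uS: "u (Suc l) = shapley m n A B (u l)" for l unfolding u_def viter_def by simp
  have u0: "u 0 = (\<lambda>_. 0)" unfolding u_def viter_def by simp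
  define W where "W = Wconst m n A B"
  have Ainf: "\<forall>i<m. A i j \<noteq> \<infinity>" if "j < n" for j using A_int that by fastforce
  have Aint: "\<exists>a::real. A i j = ereal a \<and> a \<in> \<int> \<and> real_of_ereal (A i j) = a"
    if "i < m" "j < n" "A i j \<noteq> -\<infinity>" for i j using A_int that by fastforce
  have Bint: "\<exists>b::real. B i j = ereal b \<and> b \<in> \<int> \<and> real_of_ereal (B i j) = b"
    if "i < m" "j < n" "B i j \<noteq> -\<infinity>" for i j using B_int that by fastforce
  have Wge: "\<bar>b - a\<bar> \<le> W" if "i < m" "j < n" "h < n" "A i j = ereal a" "B i h = ereal b" for i j h a b
    using Wconst_ge[of i m j n h A B] that unfolding W_def by (simp add: abs_minus_commute)
  define vE where "vE = (\<lambda>h. ereal (v h))"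
  have vfin: "\<forall>h<n. \<exists>c. vE h = ereal c" unfolding vE_def by simp
  have tfin: "\<forall>i<m. \<exists>c. tmult n B x i = ereal c" if xf: "\<forall>h<n. \<exists>c. x h = ereal c" for x
  proof (intro allI impI)
    fix i assume i: "i < m"
    obtain h0 where h0: "h0 < n" "B i h0 \<noteq> -\<infinity>" "tmult n B x i = B i h0 + x h0"
      using tmult_props[OF n0 xf] B_row i by blast
    obtain b where "B i h0 = ereal b" using Bint i h0 by blast
    moreover obtain c where "x h0 = ereal c" using xf h0 by blast
    ultimately show "\<exists>c. tmult n B x i = ereal c" using h0 by simp
  qed
  have sfin: "\<forall>j<n. \<exists>c. shapley m n A B x j = ereal c" if xf: "\<forall>h<n. \<exists>c. x h = ereal c" for x
  proof (intro allI impI)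
    fix j assume j: "j < n"
    obtain i0 where i0: "i0 < m" "A i0 j \<noteq> -\<infinity>" "shapley m n A B x j = - A i0 j + tmult n B x i0"
      using tres_props[OF m0 tfin[OF xf], of A j] A_col Ainf j unfolding shapley_def by blast
    obtain a where "A i0 j = ereal a" using Aint i0 j by blast
    moreover obtain c where "tmult n B x i0 = ereal c" using tfin[OF xf] i0 by blast
    ultimately show "\<exists>c. shapley m n A B x j = ereal c" using i0 by simp
  qed
  have ufin: "\<forall>h<n. \<exists>c. u l h = ereal c" for l
    by (induction l) (simp_all add: u0 uS sfin zero_ereal_def)
  have Wnn: "W \<ge> 0"
  proof -
    obtain i where i: "i < m" "A i 0 \<noteq> -\<infinity>" using A_col n0 by blast
    obtain h where h: "h < n" "B i h \<noteq> -\<infinity>" using B_row i by blast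
    obtain a where "A i 0 = ereal a" using Aint i n0 by blast
    moreover obtain b where "B i h = ereal b" using Bint i h by blast
    ultimately show ?thesis using Wge[of i 0 h a b] i h n0 by simp
  qed
  have key: "\<exists>L. real L \<le> 2 * real n ^ 2 * W \<and> \<not> continues n (u L)"
  proof (cases "r > 0")
    case True
    have walk: "\<forall>j<n. \<exists>c s w. u l j = ereal c \<and> s 0 = j \<and> (\<forall>t\<le>l. s t < n) \<and>
       (\<forall>t<l. w t \<in> \<int> \<and> \<bar>w t\<bar> \<le> W \<and> w t \<ge> r + v (s t) - v (s (Suc t))) \<and> c \<ge> (\<Sum>t<l. w t)" for l
    proof (induction l)
      case 0
      show ?case
      proof (intro allI impI)
        fix j assume "j < n"
        then show "\<exists>c s w. u 0 j = ereal c \<and> s 0 = j \<and> (\<forall>t\<le>0. s t < n) \<and>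
         (\<forall>t<0. w t \<in> \<int> \<and> \<bar>w t\<bar> \<le> W \<and> w t \<ge> r + v (s t) - v (s (Suc t))) \<and> c \<ge> (\<Sum>t<0. w t)"
          by (intro exI[of _ 0] exI[of _ "\<lambda>_. j"]) (simp add: u0 zero_ereal_def)
      qed
    next
      case (Suc l)
      show ?case
      proof (intro allI impI)
        fix j assume j: "j < n"
        note xf = ufin[of l]
        obtain i0 where i0: "i0 < m" "A i0 j \<noteq> -\<infinity>" "shapley m n A B (u l) j = - A i0 j + tmult n B (u l) i0"
          using tres_props[OF m0 tfin[OF xf], of A j] A_col Ainf j unfolding shapley_def by blast
        obtain k where k: "k < n" "B i0 k \<noteq> -\<infinity>" "tmult n B vE i0 = B i0 k + vE k"
          using tmult_props[OF n0 vfin] B_row i0 by blast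
        have yk: "B i0 k + u l k \<le> tmult n B (u l) i0"
          using tmult_props[OF n0 xf] B_row i0 k by blast
        have Fv: "shapley m n A B vE j \<le> - A i0 j + tmult n B vE i0"
          using tres_props[OF m0 tfin[OF vfin], of A j] A_col Ainf j i0 unfolding shapley_def by blast
        obtain c s w where csw: "u l k = ereal c" "s 0 = k" "\<forall>t\<le>l. s t < n"
          "\<forall>t<l. w t \<in> \<int> \<and> \<bar>w t\<bar> \<le> W \<and> w t \<ge> r + v (s t) - v (s (Suc t))" "c \<ge> (\<Sum>t<l. w t)"
          using Suc.IH k by blast
        obtain a where a: "A i0 j = ereal a" "a \<in> \<int>" using Aint i0 j by blast
        obtain b where b: "B i0 k = ereal b" "b \<in> \<int>" using Bint i0 k by blast
        obtain yv where yv: "tmult n B (u l) i0 = ereal yv" using tfin[OF xf] i0 by blast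
        have e1: "u (Suc l) j = ereal (- a + yv)" using uS i0 a yv by simp
        have e2: "yv \<ge> b + c" using yk b yv csw by simp
        have e3: "r + v j \<le> - a + b + v k" using Fv eigv j a b k unfolding vE_def by simp
        have e4: "\<bar>b - a\<bar> \<le> W" using Wge[of i0 j k a b] i0 j k a b by simp
        define s' where "s' = (\<lambda>t. if t = 0 then j else s (t - 1))"
        define w' where "w' = (\<lambda>t. if t = 0 then b - a else w (t - 1))"
        have sum': "(\<Sum>t<Suc l. w' t) = (b - a) + (\<Sum>t<l. w t)"
          unfolding sum.lessThan_Suc_shift w'_def by simp
        show "\<exists>c s w. u (Suc l) j = ereal c \<and> s 0 = j \<and> (\<forall>t\<le>Suc l. s t < n) \<and>
         (\<forall>t<Suc l. w t \<in> \<int> \<and> \<bar>w t\<bar> \<le> W \<and> w t \<ge> r + v (s t) - v (s (Suc t))) \<and> c \<ge> (\<Sum>t<Suc l. w t)"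
        proof (intro exI[of _ "- a + yv"] exI[of _ s'] exI[of _ w'] conjI)
          show "u (Suc l) j = ereal (- a + yv)" by (rule e1)
          show "s' 0 = j" unfolding s'_def by simp
          show "\<forall>t\<le>Suc l. s' t < n" using csw(3) j unfolding s'_def by auto
          show "\<forall>t<Suc l. w' t \<in> \<int> \<and> \<bar>w' t\<bar> \<le> W \<and> w' t \<ge> r + v (s' t) - v (s' (Suc t))"
          proof (intro allI impI)
            fix t assume t: "t < Suc l"
            show "w' t \<in> \<int> \<and> \<bar>w' t\<bar> \<le> W \<and> w' t \<ge> r + v (s' t) - v (s' (Suc t))"
            proof (cases t)
              case 0
              then show ?thesis using a b e3 e4 csw(2) unfolding s'_def w'_def by auto
            next
              case (Suc t')
              then show ?thesis using csw(4) t unfolding s'_def w'_def by auto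
            qed
          qed
          show "(\<Sum>t<Suc l. w' t) \<le> - a + yv" using sum' e2 csw(5) by linarith
        qed
      qed
    qed
    have nW: "real n * W \<ge> 1"
    proof -
      obtain c s w where "s 0 = 0" "\<forall>t\<le>n. s t < n"
          "\<forall>t<n. w t \<in> \<int> \<and> \<bar>w t\<bar> \<le> W \<and> w t \<ge> r + v (s t) - v (s (Suc t))"
        using walk[of n] n0 by blast
      then show ?thesis using walk_W[of n r n s w W v] n0 True by auto
    qed
    define L where "L = nat \<lfloor>2 * real n ^ 2 * W\<rfloor>"
    have L1: "real L \<le> 2 * real n ^ 2 * W" "real L > 2 * real n ^ 2 * W - 1"
      unfolding L_def using Wnn by (auto simp: of_nat_nat)
    have fpos: "(real L - real n + 1) / real n - (real n - 1) * W > 0"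
    proof -
      have "real n * (2 * real n * W - 1) \<ge> real n * (real n * W)"
        using nW n0 by (intro mult_left_mono) (auto simp: mult.commute)
      moreover have "real n * (real n * W) \<ge> real n * ((real n - 1) * W)"
        using Wnn n0 by (intro mult_left_mono mult_right_mono) auto
      ultimately have "real L - real n + 1 > real n * ((real n - 1) * W)"
        using L1(2) by (simp add: algebra_simps power2_eq_square)
      hence "(real L - real n + 1) / real n > (real n - 1) * W"
        using n0 by (simp add: field_simps)
      thus ?thesis by simp
    qed
    have upos: "\<forall>j<n. u L j > 0"
    proof (intro allI impI)
      fix j assume "j < n"
      then obtain c s w where csw: "u L j = ereal c" "\<forall>t\<le>L. s t < n"
          "\<forall>t<L. w t \<in> \<int> \<and> \<bar>w t\<bar> \<le> W \<and> w t \<ge> r + v (s t) - v (s (Suc t))" "c \<ge> (\<Sum>t<L. w t)"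
        using walk[of L] by blast
      have "(\<Sum>t<L. w t) \<ge> (real L - real n + 1) / real n - (real n - 1) * W"
        using walk_bound[of n r W L s w v] n0 True Wnn csw by auto
      then show "u L j > 0" using csw fpos by simp
    qed
    have S: "{u L i | i. i < n} = (\<lambda>i. u L i) ` {..<n}" by auto
    have "Min (u L ` {..<n}) \<in> u L ` {..<n}" by (rule Min_in) (use n0 in auto)
    then obtain i where "i < n" "Min {u L i | i. i < n} = u L i" unfolding S by auto
    hence "\<not> continues n (u L)" using upos unfolding continues_def by (metis leD)
    then show ?thesis using L1 by blast
  next
    case False
    hence rneg: "r < 0" using r0 by simp
    have walk: "\<forall>j<n. \<exists>c s w. u l j = ereal c \<and> s 0 = j \<and> (\<forall>t\<le>l. s t < n) \<and>
       (\<forall>t<l. w t \<in> \<int> \<and> \<bar>w t\<bar> \<le> W \<and> w t \<le> r + v (s t) - v (s (Suc t))) \<and> c \<le> (\<Sum>t<l. w t)" for l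
    proof (induction l)
      case 0
      show ?case
      proof (intro allI impI)
        fix j assume "j < n"
        then show "\<exists>c s w. u 0 j = ereal c \<and> s 0 = j \<and> (\<forall>t\<le>0. s t < n) \<and>
         (\<forall>t<0. w t \<in> \<int> \<and> \<bar>w t\<bar> \<le> W \<and> w t \<le> r + v (s t) - v (s (Suc t))) \<and> c \<le> (\<Sum>t<0. w t)"
          by (intro exI[of _ 0] exI[of _ "\<lambda>_. j"]) (simp add: u0 zero_ereal_def)
      qed
    next
      case (Suc l)
      show ?case
      proof (intro allI impI)
        fix j assume j: "j < n"
        note xf = ufin[of l]
        obtain i1 where i1: "i1 < m" "A i1 j \<noteq> -\<infinity>" "shapley m n A B vE j = - A i1 j + tmult n B vE i1"
          using tres_props[OF m0 tfin[OF vfin], of A j] A_col Ainf j unfolding shapley_def by blast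
        have le1: "shapley m n A B (u l) j \<le> - A i1 j + tmult n B (u l) i1"
          using tres_props[OF m0 tfin[OF xf], of A j] A_col Ainf j i1 unfolding shapley_def by blast
        obtain k where k: "k < n" "B i1 k \<noteq> -\<infinity>" "tmult n B (u l) i1 = B i1 k + u l k"
          using tmult_props[OF n0 xf] B_row i1 by blast
        have vk: "B i1 k + vE k \<le> tmult n B vE i1"
          using tmult_props[OF n0 vfin] B_row i1 k by blast
        obtain c s w where csw: "u l k = ereal c" "s 0 = k" "\<forall>t\<le>l. s t < n"
          "\<forall>t<l. w t \<in> \<int> \<and> \<bar>w t\<bar> \<le> W \<and> w t \<le> r + v (s t) - v (s (Suc t))" "c \<le> (\<Sum>t<l. w t)"
          using Suc.IH k by blast
        obtain a where a: "A i1 j = ereal a" "a \<in> \<int>" using Aint i1 j by blast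
        obtain b where b: "B i1 k = ereal b" "b \<in> \<int>" using Bint i1 k by blast
        obtain yv where yv: "tmult n B vE i1 = ereal yv" using tfin[OF vfin] i1 by blast
        obtain z where z: "u (Suc l) j = ereal z" using ufin[of "Suc l"] j by blast
        have e1: "z \<le> - a + b + c" using le1 uS z a b k csw by simp
        have e2: "yv \<ge> b + v k" using vk b yv unfolding vE_def by simp
        have e3: "r + v j = - a + yv" using i1 eigv j a yv unfolding vE_def by simp
        have e4: "\<bar>b - a\<bar> \<le> W" using Wge[of i1 j k a b] i1 j k a b by simp
        define s' where "s' = (\<lambda>t. if t = 0 then j else s (t - 1))"
        define w' where "w' = (\<lambda>t. if t = 0 then b - a else w (t - 1))"
        have sum': "(\<Sum>t<Suc l. w' t) = (b - a) + (\<Sum>t<l. w t)"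
          unfolding sum.lessThan_Suc_shift w'_def by simp
        show "\<exists>c s w. u (Suc l) j = ereal c \<and> s 0 = j \<and> (\<forall>t\<le>Suc l. s t < n) \<and>
         (\<forall>t<Suc l. w t \<in> \<int> \<and> \<bar>w t\<bar> \<le> W \<and> w t \<le> r + v (s t) - v (s (Suc t))) \<and> c \<le> (\<Sum>t<Suc l. w t)"
        proof (intro exI[of _ z] exI[of _ s'] exI[of _ w'] conjI)
          show "u (Suc l) j = ereal z" by (rule z)
          show "s' 0 = j" unfolding s'_def by simp
          show "\<forall>t\<le>Suc l. s' t < n" using csw(3) j unfolding s'_def by auto
          show "\<forall>t<Suc l. w' t \<in> \<int> \<and> \<bar>w' t\<bar> \<le> W \<and> w' t \<le> r + v (s' t) - v (s' (Suc t))"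
          proof (intro allI impI)
            fix t assume t: "t < Suc l"
            show "w' t \<in> \<int> \<and> \<bar>w' t\<bar> \<le> W \<and> w' t \<le> r + v (s' t) - v (s' (Suc t))"
            proof (cases t)
              case 0
              then show ?thesis using a b e2 e3 e4 csw(2) unfolding s'_def w'_def by auto
            next
              case (Suc t')
              then show ?thesis using csw(4) t unfolding s'_def w'_def by auto
            qed
          qed
          show "z \<le> (\<Sum>t<Suc l. w' t)" using sum' e1 csw(5) by linarith
        qed
      qed
    qed
    have walk': "\<exists>c s w. u l j = ereal c \<and> (\<forall>t\<le>l. s t < n) \<and>
       (\<forall>t<l. w t \<in> \<int> \<and> \<bar>w t\<bar> \<le> W \<and> w t \<ge> (-r) + (- v (s t)) - (- v (s (Suc t)))) \<and> - c \<ge> (\<Sum>t<l. w t)"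
      if jn: "j < n" for l j
    proof -
      obtain c s w where csw: "u l j = ereal c" "\<forall>t\<le>l. s t < n"
          "\<forall>t<l. w t \<in> \<int> \<and> \<bar>w t\<bar> \<le> W \<and> w t \<le> r + v (s t) - v (s (Suc t))" "c \<le> (\<Sum>t<l. w t)"
        using walk[of l] jn by blast
      show ?thesis
      proof (intro exI[of _ c] exI[of _ s] exI[of _ "\<lambda>t. - w t"] conjI)
        show "\<forall>t<l. - w t \<in> \<int> \<and> \<bar>- w t\<bar> \<le> W \<and> (-r) + (- v (s t)) - (- v (s (Suc t))) \<le> - w t"
          using csw(3) by (auto simp: Ints_minus)
        show "(\<Sum>t<l. - w t) \<le> - c" using csw(4) by (simp add: sum_negf)
      qed (use csw in auto)
    qed
    have nW: "real n * W \<ge> 1"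
    proof -
      obtain c s w where "\<forall>t\<le>n. s t < n"
          "\<forall>t<n. w t \<in> \<int> \<and> \<bar>w t\<bar> \<le> W \<and> w t \<ge> (-r) + (- v (s t)) - (- v (s (Suc t)))"
        using walk'[of 0 n] n0 by blast
      then show ?thesis using walk_W[of n "-r" n s w W "\<lambda>h. - v h"] n0 rneg by auto
    qed
    define L where "L = nat \<lfloor>2 * real n ^ 2 * W\<rfloor>"
    have L1: "real L \<le> 2 * real n ^ 2 * W" "real L > 2 * real n ^ 2 * W - 1"
      unfolding L_def using Wnn by (auto simp: of_nat_nat)
    have fpos: "(real L - real n + 1) / real n - (real n - 1) * W > 0"
    proof -
      have "real n * (2 * real n * W - 1) \<ge> real n * (real n * W)"
        using nW n0 by (intro mult_left_mono) (auto simp: mult.commute)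
      moreover have "real n * (real n * W) \<ge> real n * ((real n - 1) * W)"
        using Wnn n0 by (intro mult_left_mono mult_right_mono) auto
      ultimately have "real L - real n + 1 > real n * ((real n - 1) * W)"
        using L1(2) by (simp add: algebra_simps power2_eq_square)
      hence "(real L - real n + 1) / real n > (real n - 1) * W"
        using n0 by (simp add: field_simps)
      thus ?thesis by simp
    qed
    have uneg: "\<forall>j<n. u L j < 0"
    proof (intro allI impI)
      fix j assume "j < n"
      then obtain c s w where csw: "u L j = ereal c" "\<forall>t\<le>L. s t < n"
          "\<forall>t<L. w t \<in> \<int> \<and> \<bar>w t\<bar> \<le> W \<and> w t \<ge> (-r) + (- v (s t)) - (- v (s (Suc t)))" "- c \<ge> (\<Sum>t<L. w t)"
        using walk'[of j L] by blast
      have "(\<Sum>t<L. w t) \<ge> (real L - real n + 1) / real n - (real n - 1) * W"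
        using walk_bound[of n "-r" W L s w "\<lambda>h. - v h"] n0 rneg Wnn csw by auto
      then show "u L j < 0" using csw fpos by simp
    qed
    have S: "{u L i | i. i < n} = (\<lambda>i. u L i) ` {..<n}" by auto
    have "Max (u L ` {..<n}) \<in> u L ` {..<n}" by (rule Max_in) (use n0 in auto)
    then obtain i where "i < n" "Max {u L i | i. i < n} = u L i" unfolding S by auto
    hence "\<not> continues n (u L)" using uneg unfolding continues_def by (metis leD)
    then show ?thesis using L1 by blast
  qed
  then obtain L where L: "real L \<le> 2 * real n ^ 2 * W" "\<not> continues n (u L)" by blast
  define N where "N = (LEAST l. \<not> continues n (u l))"
  have N1: "\<not> continues n (u N)" unfolding N_def by (rule LeastI[of _ L]) (rule L(2))
  have N2: "N \<le> L" unfolding N_def by (rule Least_le) (rule L(2))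
  have N3: "\<forall>l<N. continues n (u l)" unfolding N_def using not_less_Least by blast
  show ?thesis using N1 N2 N3 L(1) unfolding u_def W_def
    by (intro exI[of _ N]) (auto intro: order.trans)
qed

end
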